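(* For any groupcast index coding problem, the optimal broadcast rate satisfies $\beta\le\beta_{IUPM}$, where $\beta_{IUPM}$ is the independent user partition multicast rate defined in the context.
   Context: GIC problem: there are $m$ packets $x_1,\dots,x_m$, each a binary string of length $t$. For each $i\in[m]$ there is a nonempty set $U_i=\{u_i^1,\dots,u_i^{|U_i|}\}$ of users demanding $x_i$, $U=\bigcup_i U_i$; user $u_i^j$ knows the packets $x_{i'}$, $i'\in A_i^j$, where $A_i^j\subseteq[m]\setminus\{i\}$. An index code of length $r$ for packet length $t$ consists of an encoder $\phi:(\{0,1\}^t)^m\to\{0,1\}^r$ and, for each user $u_i^j$, a decoder $\psi_i^j$ mapping $\phi(x_1,\dots,x_m)$ together with $(x_{i'})_{i'\in A_i^j}$ to $x_i$, correctly for all packet values. The optimal broadcast rate is $\beta=\inf_t\inf r/t$, the inner infimum over all index codes for packet length $t$. IUPM rate: take a partition of $U$ into nonempty disjoint sets $W_1,\dots,W_h$ ($1\le h\le m$), with $Y_e=\{i: u_i^j\in W_e\text{ for some } j\}$, $c_e=\min\{|A_i^j\cap Y_e|: u_i^j\in W_e\}$ and $b_e=|Y_e|-c_e$. Let $\mathbb{F}=GF(2^s)$ for some $s\ge1$, with packets viewed (when $s\mid t$) as vectors in $\mathbb{F}^{t/s}$ and linear combinations taken componentwise. A valid coefficient choice consists, for each $e\in[h]$, of $b_e$ vectors $\alpha\in\mathbb{F}^m$ with $\alpha_i=0$ for $i\notin Y_e$, such that every user $u_i^j\in W_e$ can recover $x_i$ from the $b_e$ combinations $\sum_{i'}\alpha_{i'}x_{i'}$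 together with its side information (e.g. the combinations of a $(|Y_e|,b_e)$ MDS code on the packets of $Y_e$). Let $\mathbf N$ be the matrix whose rows are all $\sum_e b_e$ of these vectors. The IUPM rate of the partition is the minimum of $\operatorname{rank}\mathbf N$ over $s$ and all valid coefficient choices, and $\beta_{IUPM}$ is the minimum of this over all user partitions. *)

theory Defs
  imports "HOL-Library.FuncSet" "Jordan_Normal_Form.DL_Rank"
begin

text \<open>A groupcast index coding (GIC) problem with m packets, indexed 0..m-1.
  Users are elements of a finite set U; user u demands packet dem u and knows
  the packets with indices in side u.\<close>
definition gic :: "nat \<Rightarrow> 'u set \<Rightarrow> ('u \<Rightarrow> nat) \<Rightarrow> ('u \<Rightarrow> nat set) \<Rightarrow> bool" where
  "gic m U dem side \<longleftrightarrow> finite U \<and>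
     (\<forall>u\<in>U. dem u < m \<and> side u \<subseteq> {..<m} - {dem u}) \<and>
     (\<forall>i<m. \<exists>u\<in>U. dem u = i)"

definition packets :: "nat \<Rightarrow> nat \<Rightarrow> (nat \<Rightarrow> bool list) set" where
  "packets m t = ({..<m} \<rightarrow>\<^sub>E {bs. length bs = t})"

definition is_index_code ::
  "nat \<Rightarrow> 'u set \<Rightarrow> ('u \<Rightarrow> nat) \<Rightarrow> ('u \<Rightarrow> nat set) \<Rightarrow> nat \<Rightarrow> nat
   \<Rightarrow> ((nat \<Rightarrow> bool list) \<Rightarrow> bool list)
   \<Rightarrow> ('u \<Rightarrow> bool list \<Rightarrow> (nat \<Rightarrow> bool list) \<Rightarrow> bool list) \<Rightarrow> bool" where
  "is_index_code m U dem side t r phi psi \<longleftrightarrow>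
     (\<forall>x\<in>packets m t. length (phi x) = r) \<and>
     (\<forall>u\<in>U. \<forall>x\<in>packets m t. psi u (phi x) (restrict x (side u)) = x (dem u))"

definition has_index_code ::
  "nat \<Rightarrow> 'u set \<Rightarrow> ('u \<Rightarrow> nat) \<Rightarrow> ('u \<Rightarrow> nat set) \<Rightarrow> nat \<Rightarrow> nat \<Rightarrow> bool" where
  "has_index_code m U dem side t r \<longleftrightarrow> (\<exists>phi psi. is_index_code m U dem side t r phi psi)"

definition broadcast_rate :: "nat \<Rightarrow> 'u set \<Rightarrow> ('u \<Rightarrow> nat) \<Rightarrow> ('u \<Rightarrow> nat set) \<Rightarrow> real" where
  "broadcast_rate m U dem side =
     Inf {real r / real t | t r. t > 0 \<and> has_index_code m U dem side t r}"

definition user_partition :: "nat \<Rightarrow> 'u set \<Rightarrow> nat \<Rightarrow> (nat \<Rightarrow> 'u set) \<Rightarrow> bool" where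
  "user_partition m U h W \<longleftrightarrow> 1 \<le> h \<and> h \<le> m \<and>
     (\<forall>e<h. W e \<noteq> {}) \<and>
     (\<forall>e<h. \<forall>e'<h. e \<noteq> e' \<longrightarrow> W e \<inter> W e' = {}) \<and>
     (\<Union>e<h. W e) = U"

definition Yset :: "('u \<Rightarrow> nat) \<Rightarrow> 'u set \<Rightarrow> nat set" where
  "Yset dem We = dem ` We"

definition cval :: "('u \<Rightarrow> nat) \<Rightarrow> ('u \<Rightarrow> nat set) \<Rightarrow> 'u set \<Rightarrow> nat" where
  "cval dem side We = Min ((\<lambda>u. card (side u \<inter> Yset dem We)) ` We)"

definition bval :: "('u \<Rightarrow> nat) \<Rightarrow> ('u \<Rightarrow> nat set) \<Rightarrow> 'u set \<Rightarrow> nat" where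
  "bval dem side We = card (Yset dem We) - cval dem side We"

text \<open>Valid coefficient choice over a field 'f: coef e k is the k-th coefficient vector
  (k < b_e) of group e, given as a function on packet indices 0..m-1.  It must vanish
  outside Y_e, and every user of W_e must be able to recover its demanded packet from
  the b_e linear combinations together with its side information.\<close>
definition valid_coefs ::
  "nat \<Rightarrow> 'u set \<Rightarrow> ('u \<Rightarrow> nat) \<Rightarrow> ('u \<Rightarrow> nat set) \<Rightarrow> nat \<Rightarrow> (nat \<Rightarrow> 'u set)
   \<Rightarrow> (nat \<Rightarrow> nat \<Rightarrow> nat \<Rightarrow> 'f::field) \<Rightarrow> bool" where
  "valid_coefs m U dem side h W coef \<longleftrightarrow>
     (\<forall>e<h. \<forall>k<bval dem side (W e). \<forall>i<m. i \<notin> Yset dem (W e) \<longrightarrow> coef e k i = 0) \<and>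
     (\<forall>e<h. \<forall>u\<in>W e. \<exists>dec :: (nat \<Rightarrow> 'f) \<Rightarrow> (nat \<Rightarrow> 'f) \<Rightarrow> 'f.
        \<forall>x \<in> {..<m} \<rightarrow>\<^sub>E (UNIV :: 'f set).
          dec (\<lambda>k\<in>{..<bval dem side (W e)}. \<Sum>i<m. coef e k i * x i)
              (restrict x (side u)) = x (dem u))"

definition coef_matrix ::
  "nat \<Rightarrow> ('u \<Rightarrow> nat) \<Rightarrow> ('u \<Rightarrow> nat set) \<Rightarrow> nat \<Rightarrow> (nat \<Rightarrow> 'u set)
   \<Rightarrow> (nat \<Rightarrow> nat \<Rightarrow> nat \<Rightarrow> 'f::field) \<Rightarrow> 'f mat" where
  "coef_matrix m dem side h W coef =
     mat_of_rows m (concat (map (\<lambda>e. map (\<lambda>k. vec m (coef e k)) [0..<bval dem side (W e)]) [0..<h]))"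

definition matrix_rank :: "'f::field mat \<Rightarrow> nat" where
  "matrix_rank N = vec_space.rank (dim_row N) N"

end

theory Submission
  imports Defs
begin

context vec_space
begin

lemma cols_in_span_max:
  assumes A: "A \<in> carrier_mat n nc"
  and mx: "maximal S (\<lambda>T. T \<subseteq> set (cols A) \<and> lin_indpt T)"
  shows "set (cols A) \<subseteq> span S"
proof
  fix c assume c: "c \<in> set (cols A)"
  have SC: "S \<subseteq> set (cols A)" "lin_indpt S" using mx unfolding maximal_def by auto
  have colsC: "set (cols A) \<subseteq> carrier_vec n" using A cols_dim by blast
  show "c \<in> span S"
  proof (cases "c \<in> S")
    case True then show ?thesis using in_own_span[of S] SC colsC by auto
  next
    case False
    have "\<not> (S \<union> {c} \<subseteq> set (cols A) \<and> lin_indpt (S \<union> {c}))"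
    proof
      assume h: "S \<union> {c} \<subseteq> set (cols A) \<and> lin_indpt (S \<union> {c})"
      then have "S \<union> {c} = S" using mx unfolding maximal_def by blast
      then show False using False by auto
    qed
    then have "lin_dep (S \<union> {c})" using SC c by auto
    then show ?thesis using lin_dep_iff_in_span[of S c] SC colsC c False by auto
  qed
qed

lemma mult_in_span_cols:
  assumes A: "A \<in> carrier_mat n nc" and v: "v \<in> carrier_vec nc"
  shows "A *\<^sub>v v \<in> span (set (cols A))"
proof -
  have colsC: "set (cols A) \<subseteq> carrier_vec n" using A cols_dim by blast
  have e1: "lincomb_list (\<lambda>i. v $ i) (cols A) = mat_of_cols n (cols A) *\<^sub>v vec (length (cols A)) (\<lambda>i. v $ i)"
    by (rule lincomb_list_as_mat_mult) (use colsC in auto)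
  have e2: "mat_of_cols n (cols A) = A" using A by auto
  have e3: "vec (length (cols A)) (\<lambda>i. v $ i) = v" using A v by (auto intro!: eq_vecI)
  have "A *\<^sub>v v \<in> span_list (cols A)"
    by (rule in_span_listI[where c="\<lambda>i. v $ i"]) (use e1 e2 e3 in \<open>auto simp: class_field_def\<close>)
  then show ?thesis using span_list_as_span colsC by auto
qed

lemma card_image_mult:
  assumes A: "A \<in> carrier_mat n nc" and finF: "finite (UNIV :: 'a set)"
  shows "card ((\<lambda>v. A *\<^sub>v v) ` carrier_vec nc) \<le> card (UNIV :: 'a set) ^ rank A"
proof -
  obtain S where mx: "maximal S (\<lambda>T. T \<subseteq> set (cols A) \<and> lin_indpt T)"
    using maximal_exists[of "(\<lambda>T. T \<subseteq> set (cols A) \<and> lin_indpt T)" "card (set (cols A))" "{}"]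
    by (meson List.finite_set card_mono empty_iff empty_subsetI finite_lin_indpt2 rev_finite_subset)
  have rk: "rank A = card S" using rank_card_indpt[OF A mx] .
  have SC: "S \<subseteq> set (cols A)" using mx unfolding maximal_def by auto
  have colsC: "set (cols A) \<subseteq> carrier_vec n" using A cols_dim by blast
  have SCv: "S \<subseteq> carrier_vec n" using SC colsC by auto
  have finS: "finite S" using SC finite_subset by blast
  have sub: "submodule class_ring (span S) V" using span_is_submodule SCv by simp
  have "span (set (cols A)) \<subseteq> span S"
    by (rule span_is_subset[OF cols_in_span_max[OF A mx] sub])
  then have "(\<lambda>v. A *\<^sub>v v) ` carrier_vec nc \<subseteq> span S" using mult_in_span_cols[OF A] by auto
  also have "span S \<subseteq> (\<lambda>a. lincomb a S) ` (S \<rightarrow>\<^sub>E UNIV)"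
  proof
    fix w assume "w \<in> span S"
    then obtain a where a: "a \<in> S \<rightarrow> carrier class_ring" "lincomb a S = w"
      using finite_in_span[OF finS] SCv by auto
    have "lincomb (restrict a S) S = lincomb a S"
      by (rule lincomb_cong) (use SCv a in auto)
    then show "w \<in> (\<lambda>a. lincomb a S) ` (S \<rightarrow>\<^sub>E UNIV)" using a
      by (intro image_eqI[where x="restrict a S"]) auto
  qed
  finally have "card ((\<lambda>v. A *\<^sub>v v) ` carrier_vec nc) \<le> card ((\<lambda>a. lincomb a S) ` (S \<rightarrow>\<^sub>E (UNIV::'a set)))"
    by (intro card_mono) (auto intro!: finite_imageI finite_PiE finS finF)
  also have "\<dots> \<le> card (S \<rightarrow>\<^sub>E (UNIV::'a set))" by (rule card_image_le) (auto intro!: finite_PiE finS finF)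
  also have "\<dots> = card (UNIV :: 'a set) ^ card S" by (simp add: card_PiE finS)
  finally show ?thesis using rk by simp
qed
end

lemma bool_lists_card: "finite {bs::bool list. length bs = n}" "card {bs::bool list. length bs = n} = 2 ^ n"
proof -
  have e: "{bs::bool list. length bs = n} = {xs. set xs \<subseteq> UNIV \<and> length xs = n}" by auto
  show "finite {bs::bool list. length bs = n}" unfolding e by (rule finite_lists_length_eq) simp
  show "card {bs::bool list. length bs = n} = 2 ^ n" unfolding e by (subst card_lists_length_eq) (auto simp: card_UNIV_bool)
qed

lemma coef_row_eq:
  fixes coef :: "nat \<Rightarrow> nat \<Rightarrow> nat \<Rightarrow> 'f::field"
  assumes eq: "coef_matrix m dem side h W coef *\<^sub>v vec m x = coef_matrix m dem side h W coef *\<^sub>v vec m x'"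
    and e: "e < h" and k: "k < bval dem side (W e)"
  shows "(\<Sum>i<m. coef e k i * x i) = (\<Sum>i<m. coef e k i * x' i)"
proof -
  define rows where "rows = concat (map (\<lambda>e. map (\<lambda>k. vec m (coef e k)) [0..<bval dem side (W e)]) [0..<h])"
  have N: "coef_matrix m dem side h W coef = mat_of_rows m rows" unfolding coef_matrix_def rows_def ..
  have "vec m (coef e k) \<in> set rows" unfolding rows_def using e k by (auto intro!: bexI[of _ e])
  then obtain j where j: "j < length rows" "rows ! j = vec m (coef e k)" by (auto simp: in_set_conv_nth)
  have rj: "row (mat_of_rows m rows) j = vec m (coef e k)" using j by (subst mat_of_rows_row) auto
  have "\<And>y. (mat_of_rows m rows *\<^sub>v vec m y) $ j = (\<Sum>i<m. coef e k i * y i)"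
    using j rj by (auto simp: scalar_prod_def lessThan_atLeast0)
  then show ?thesis using eq[unfolded N] by metis
qed

theorem theorem3:
  fixes m :: nat and U :: "'u set" and dem :: "'u \<Rightarrow> nat" and side :: "'u \<Rightarrow> nat set"
    and h :: nat and W :: "nat \<Rightarrow> 'u set"
    and s :: nat and coef :: "nat \<Rightarrow> nat \<Rightarrow> nat \<Rightarrow> 'f::{finite,field}"
  assumes "gic m U dem side"
    and "user_partition m U h W"
    and "s \<ge> 1" and "card (UNIV :: 'f set) = 2 ^ s"
    and "valid_coefs m U dem side h W coef"
  shows "broadcast_rate m U dem side \<le> real (matrix_rank (coef_matrix m dem side h W coef))"
proof -
  note gic = assms(1)[unfolded gic_def] and up = assms(2)[unfolded user_partition_def]
    and vc = assms(5)[unfolded valid_coefs_def]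
  define N where "N = coef_matrix m dem side h W coef"
  define R where "R = dim_row N"
  define r where "r = matrix_rank N"
  have NC: "N \<in> carrier_mat R m" unfolding N_def R_def coef_matrix_def by auto
  define D where "D = {..<m} \<rightarrow>\<^sub>E (UNIV :: 'f set)"
  define M where "M = (\<lambda>x::nat \<Rightarrow> 'f. N *\<^sub>v vec m x)"
  define L where "L = (\<lambda>n. {bs::bool list. length bs = n})"
  have finD: "finite D" unfolding D_def by (auto intro!: finite_PiE)
  have "M ` D \<subseteq> (\<lambda>v. N *\<^sub>v v) ` carrier_vec m" unfolding M_def by auto
  have "carrier_vec m \<subseteq> (\<lambda>f. vec m f) ` D"
  proof
    fix v :: "'f vec" assume v: "v \<in> carrier_vec m"
    show "v \<in> (\<lambda>f. vec m f) ` D"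
      by (rule image_eqI[where x="\<lambda>i. if i < m then v $ i else undefined"]) (use v in \<open>auto simp: D_def split: if_splits\<close>)
  qed
  then have finite_carrier_vec: "finite (carrier_vec m :: 'f vec set)" using finD finite_surj by blast
  note \<open>M ` D \<subseteq> _\<close>
  then have "card (M ` D) \<le> card ((\<lambda>v. N *\<^sub>v v) ` carrier_vec m)"
    by (intro card_mono) (auto intro!: finite_imageI simp: finite_carrier_vec)
  also have "\<dots> \<le> card (UNIV :: 'f set) ^ r"
    using vec_space.card_image_mult[OF NC] unfolding r_def matrix_rank_def R_def by simp
  also have "\<dots> = card (L (s * r))" unfolding L_def bool_lists_card assms(4) by (simp add: power_mult)
  finally obtain enc where enc: "enc ` (M ` D) \<subseteq> L (s * r)" "inj_on enc (M ` D)"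
    using card_le_inj[of "M ` D" "L (s * r)"] finD bool_lists_card unfolding L_def by blast
  obtain fb where fb: "bij_betw fb (L s) (UNIV :: 'f set)"
    using finite_same_card_bij[of "L s" "UNIV :: 'f set"] bool_lists_card assms(4) unfolding L_def by auto
  define X where "X = (\<lambda>x::nat \<Rightarrow> bool list. \<lambda>i. if i < m then fb (x i) else undefined)"
  define phi where "phi = (\<lambda>x. enc (M (X x)))"
  define psi where "psi = (\<lambda>u c (y::nat \<Rightarrow> bool list). inv_into (L s) fb
     ((SOME x'. x' \<in> D \<and> enc (M x') = c \<and> (\<forall>i\<in>side u. x' i = fb (y i))) (dem u)))"
  have XD: "X x \<in> D" for x unfolding X_def D_def by (auto split: if_splits)
  have code: "is_index_code m U dem side s (s * r) phi psi"
    unfolding is_index_code_def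
  proof (intro conjI ballI)
    fix x assume "x \<in> packets m s"
    show "length (phi x) = s * r" using enc(1) XD[of x] unfolding phi_def L_def by auto
  next
    fix u x assume u: "u \<in> U" and x: "x \<in> packets m s"
    have "dem u < m \<and> side u \<subseteq> {..<m} - {dem u}" using conjunct1[OF conjunct2[OF gic]] u by blast
    then have um: "dem u < m" "side u \<subseteq> {..<m}" by auto
    have "u \<in> (\<Union>e<h. W e)" using up u by simp
    then obtain e where e: "e < h" "u \<in> W e" by blast
    obtain dec where dec0: "\<forall>x \<in> {..<m} \<rightarrow>\<^sub>E (UNIV :: 'f set).
        dec (\<lambda>k\<in>{..<bval dem side (W e)}. \<Sum>i<m. coef e k i * x i) (restrict x (side u)) = x (dem u)"
      using conjunct2[OF vc, rule_format, OF e] by blast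
    have dec: "\<And>x. x \<in> {..<m} \<rightarrow>\<^sub>E (UNIV :: 'f set) \<Longrightarrow>
        dec (\<lambda>k\<in>{..<bval dem side (W e)}. \<Sum>i<m. coef e k i * x i) (restrict x (side u)) = x (dem u)"
      using dec0 by blast
    define y where "y = restrict x (side u)"
    define P where "P = (\<lambda>x'. x' \<in> D \<and> enc (M x') = phi x \<and> (\<forall>i\<in>side u. x' i = fb (y i)))"
    have "\<forall>i\<in>side u. X x i = fb (y i)" using um by (auto simp: X_def y_def)
    then have PX: "P (X x)" unfolding P_def phi_def using XD[of x] by simp
    define x' where "x' = (SOME x'. P x')"
    have Px': "P x'" unfolding x'_def using PX by (rule someI[of P])
    have Meq: "M x' = M (X x)"
      by (rule inj_onD[OF enc(2)]) (use Px' XD[of x] in \<open>auto simp: P_def phi_def\<close>)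
    have geq: "(\<lambda>k\<in>{..<bval dem side (W e)}. \<Sum>i<m. coef e k i * x' i) =
               (\<lambda>k\<in>{..<bval dem side (W e)}. \<Sum>i<m. coef e k i * X x i)"
      using coef_row_eq[of m dem side h W coef x' "X x" e] Meq e(1) unfolding M_def N_def
      by (intro restrict_ext) auto
    have req: "restrict x' (side u) = restrict (X x) (side u)"
      using Px' PX unfolding P_def by (intro restrict_ext) auto
    have x'D: "x' \<in> {..<m} \<rightarrow>\<^sub>E (UNIV :: 'f set)" using Px' unfolding P_def D_def by blast
    have XxD: "X x \<in> {..<m} \<rightarrow>\<^sub>E (UNIV :: 'f set)" using XD[of x] unfolding D_def by blast
    have "x' (dem u) = dec (\<lambda>k\<in>{..<bval dem side (W e)}. \<Sum>i<m. coef e k i * x' i) (restrict x' (side u))"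
      using dec[OF x'D] by simp
    also have "\<dots> = dec (\<lambda>k\<in>{..<bval dem side (W e)}. \<Sum>i<m. coef e k i * X x i) (restrict (X x) (side u))"
      by (simp only: geq req)
    also have "\<dots> = X x (dem u)" using dec[OF XxD] .
    finally have "x' (dem u) = X x (dem u)" .
    then have "x' (dem u) = fb (x (dem u))" unfolding X_def using um by simp
    moreover have "x (dem u) \<in> L s" using x um unfolding packets_def L_def by auto
    ultimately have "inv_into (L s) fb (x' (dem u)) = x (dem u)"
      using fb by (simp add: bij_betw_def inv_into_f_f)
    then show "psi u (phi x) (restrict x (side u)) = x (dem u)"
      unfolding psi_def x'_def P_def y_def by simp
  qed
  have "real (s * r) / real s \<in> {real r / real t | t r. t > 0 \<and> has_index_code m U dem side t r}"
  proof -
    have "\<exists>t r'. real (s*r)/real s = real r'/real t \<and> t>0 \<and> has_index_code m U dem side t r'"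
      using code assms(3) unfolding has_index_code_def by (intro exI[of _ s] exI[of _ "s*r"]) auto
    then show ?thesis by simp
  qed
  then have "broadcast_rate m U dem side \<le> real (s * r) / real s"
    unfolding broadcast_rate_def
    by (intro cInf_lower) (auto intro!: bdd_belowI[where m=0])
  also have "\<dots> = real r" using assms(3) by simp
  finally show ?thesis unfolding r_def N_def .
qed
end
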